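(* Let $\mathcal B$ be \textsc{AlternatingOracle}. Then for every input $(\sigma,\omega)$ and every realization of its random choices, $$\mathrm{OBJ}_{\mathcal B}\le3\cdot\mathrm{OPT}+3\eta.$$
   Context: Caching with predictions. A cache of capacity $k$ starts empty; requests $\sigma(1),\dots,\sigma(T)$ are processed online; $\nu(t)=\min\{s>t:\sigma(s)=\sigma(t)\}$ ($T+1$ if none); with request $t$ the algorithm receives a prediction $\omega(t)$ of $\nu(t)$; $\eta=\sum_{t=1}^T|\nu(t)-\omega(t)|$. On a hit nothing happens; on a miss the page is loaded, and if the cache is full one cached page is first evicted. $\mathrm{OBJ}_{\mathcal Q}$ is the number of misses of $\mathcal Q$; $\mathrm{OPT}$ is the number of misses of Belady's optimal offline algorithm. Cached pages are identified by the index of their most recent request: $\mathcal I(t)$ is the set of indices $\max\{t'\le t:\sigma(t')=s\}$ over cached pages $s$ after request $t$. \textsc{AlternatingOracle}: on a miss with full cache at time $t$ one of three rules evicts a page: BlindOracle (evict cached $\sigma(i)$, $i\in\mathcal I(t-1)$, with maximal $\omega(i)$); RandomAlg (evict a uniformly random cached page); Corrector (with $W=\{i\in\mathcal I(t-1):\omega(i)<t\}$, evict $\sigma(i)$, $i\in W$, with minimal $\omega(i)$ if $W\ne\emptyset$, otherwise evict as BlindOracle). If $\sigma(t)$ was never requested before, BlindOracle is used; otherwise, if the most recent eviction of page $\sigma(t)$ used BlindOracle / RandomAlg / Corrector, then at time $t$ RandomAlg / Corrector / BlindOracle is used, respectively. *)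

theory Defs
  imports Main
begin

text \<open>Requests are sigma 1, ..., sigma T (pages of type 'a); predictions omega t :: nat.
  Cache contents are represented as the set of cached pages C t after request t (C 0 = {}).\<close>

definition next_req :: "(nat \<Rightarrow> 'a) \<Rightarrow> nat \<Rightarrow> nat \<Rightarrow> nat" where
  "next_req \<sigma> T t =
     (if \<exists>s. t < s \<and> s \<le> T \<and> \<sigma> s = \<sigma> t
      then (LEAST s. t < s \<and> s \<le> T \<and> \<sigma> s = \<sigma> t) else T + 1)"

definition pred_error :: "(nat \<Rightarrow> 'a) \<Rightarrow> (nat \<Rightarrow> nat) \<Rightarrow> nat \<Rightarrow> int" where
  "pred_error \<sigma> \<omega> T = (\<Sum>t = 1..T. \<bar>int (next_req \<sigma> T t) - int (\<omega> t)\<bar>)"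

text \<open>Index of the most recent request of page p among requests 1..t
  (the element of I(t) identifying the cached page p).\<close>
definition last_req :: "(nat \<Rightarrow> 'a) \<Rightarrow> nat \<Rightarrow> 'a \<Rightarrow> nat" where
  "last_req \<sigma> t p = Max {i \<in> {1..t}. \<sigma> i = p}"

definition misses :: "(nat \<Rightarrow> 'a) \<Rightarrow> nat \<Rightarrow> (nat \<Rightarrow> 'a set) \<Rightarrow> nat" where
  "misses \<sigma> T C = card {t \<in> {1..T}. \<sigma> t \<notin> C (t - 1)}"

definition feasible_run :: "nat \<Rightarrow> (nat \<Rightarrow> 'a) \<Rightarrow> nat \<Rightarrow> (nat \<Rightarrow> 'a set) \<Rightarrow> bool" where
  "feasible_run k \<sigma> T C \<longleftrightarrow> C 0 = {} \<and>
     (\<forall>t \<in> {1..T}.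
        (\<sigma> t \<in> C (t - 1) \<longrightarrow> C t = C (t - 1)) \<and>
        (\<sigma> t \<notin> C (t - 1) \<and> card (C (t - 1)) < k \<longrightarrow> C t = insert (\<sigma> t) (C (t - 1))) \<and>
        (\<sigma> t \<notin> C (t - 1) \<and> k \<le> card (C (t - 1)) \<longrightarrow>
           (\<exists>p \<in> C (t - 1). C t = insert (\<sigma> t) (C (t - 1) - {p}))))"

text \<open>OPT: the number of misses of Belady's optimal offline algorithm, i.e. the minimum
  number of misses over all feasible runs.\<close>
definition OPT :: "nat \<Rightarrow> (nat \<Rightarrow> 'a) \<Rightarrow> nat \<Rightarrow> nat" where
  "OPT k \<sigma> T = (LEAST m. \<exists>C. feasible_run k \<sigma> T C \<and> misses \<sigma> T C = m)"

datatype rule = BlindOracle | RandomAlg | Corrector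

fun next_rule :: "rule \<Rightarrow> rule" where
  "next_rule BlindOracle = RandomAlg"
| "next_rule RandomAlg = Corrector"
| "next_rule Corrector = BlindOracle"

definition blind_evicts :: "(nat \<Rightarrow> 'a) \<Rightarrow> (nat \<Rightarrow> nat) \<Rightarrow> 'a set \<Rightarrow> nat \<Rightarrow> 'a \<Rightarrow> bool" where
  "blind_evicts \<sigma> \<omega> S t p \<longleftrightarrow> p \<in> S \<and>
     (\<forall>q \<in> S. \<omega> (last_req \<sigma> (t - 1) q) \<le> \<omega> (last_req \<sigma> (t - 1) p))"

definition corrector_evicts :: "(nat \<Rightarrow> 'a) \<Rightarrow> (nat \<Rightarrow> nat) \<Rightarrow> 'a set \<Rightarrow> nat \<Rightarrow> 'a \<Rightarrow> bool" where
  "corrector_evicts \<sigma> \<omega> S t p \<longleftrightarrow>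
     (let W = {q \<in> S. \<omega> (last_req \<sigma> (t - 1) q) < t} in
      if W \<noteq> {} then p \<in> W \<and> (\<forall>q \<in> W. \<omega> (last_req \<sigma> (t - 1) p) \<le> \<omega> (last_req \<sigma> (t - 1) q))
      else blind_evicts \<sigma> \<omega> S t p)"

text \<open>RandomAlg: any realization of the uniformly random choice, i.e. any cached page.\<close>
fun rule_evicts :: "rule \<Rightarrow> (nat \<Rightarrow> 'a) \<Rightarrow> (nat \<Rightarrow> nat) \<Rightarrow> 'a set \<Rightarrow> nat \<Rightarrow> 'a \<Rightarrow> bool" where
  "rule_evicts BlindOracle \<sigma> \<omega> S t p = blind_evicts \<sigma> \<omega> S t p"
| "rule_evicts RandomAlg \<sigma> \<omega> S t p = (p \<in> S)"
| "rule_evicts Corrector \<sigma> \<omega> S t p = corrector_evicts \<sigma> \<omega> S t p"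

text \<open>Rule used at time t: BlindOracle if sigma t was never requested before; otherwise the
  successor of the rule used for the most recent eviction of page sigma t.
  ev e = Some p records that page p was evicted at time e, rl e the rule used then.\<close>
definition chosen_rule :: "(nat \<Rightarrow> 'a) \<Rightarrow> (nat \<Rightarrow> 'a option) \<Rightarrow> (nat \<Rightarrow> rule) \<Rightarrow> nat \<Rightarrow> rule" where
  "chosen_rule \<sigma> ev rl t =
     (if \<not> (\<exists>i \<in> {1..<t}. \<sigma> i = \<sigma> t) then BlindOracle
      else next_rule (rl (Max {e \<in> {1..<t}. ev e = Some (\<sigma> t)})))"

text \<open>A run (realization) of AlternatingOracle, with all ties and random choices arbitrary.\<close>
definition alt_oracle_run :: "nat \<Rightarrow> (nat \<Rightarrow> 'a) \<Rightarrow> (nat \<Rightarrow> nat) \<Rightarrow> nat \<Rightarrow>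
    (nat \<Rightarrow> 'a set) \<Rightarrow> (nat \<Rightarrow> 'a option) \<Rightarrow> (nat \<Rightarrow> rule) \<Rightarrow> bool" where
  "alt_oracle_run k \<sigma> \<omega> T C ev rl \<longleftrightarrow> C 0 = {} \<and>
     (\<forall>t \<in> {1..T}.
        (\<sigma> t \<in> C (t - 1) \<longrightarrow> C t = C (t - 1) \<and> ev t = None) \<and>
        (\<sigma> t \<notin> C (t - 1) \<and> card (C (t - 1)) < k \<longrightarrow>
           C t = insert (\<sigma> t) (C (t - 1)) \<and> ev t = None) \<and>
        (\<sigma> t \<notin> C (t - 1) \<and> k \<le> card (C (t - 1)) \<longrightarrow>
           (\<exists>p. ev t = Some p \<and> rl t = chosen_rule \<sigma> ev rl t \<and>
                rule_evicts (rl t) \<sigma> \<omega> (C (t - 1)) t p \<and>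
                C t = insert (\<sigma> t) (C (t - 1) - {p}))))"

end

theory Submission imports Defs begin

fun OF :: "nat \<Rightarrow> (nat \<Rightarrow> 'a) \<Rightarrow> nat \<Rightarrow> nat \<Rightarrow> 'a set \<Rightarrow> nat" where
  "OF k \<sigma> t 0 S = 0"
| "OF k \<sigma> t (Suc n) S = (if \<sigma> (Suc t) \<in> S then OF k \<sigma> (Suc t) n S
     else if card S < k then Suc (OF k \<sigma> (Suc t) n (insert (\<sigma> (Suc t)) S))
     else Suc (Min ((\<lambda>p. OF k \<sigma> (Suc t) n (insert (\<sigma> (Suc t)) (S - {p}))) ` S)))"

definition succ_ok :: "nat \<Rightarrow> 'a \<Rightarrow> 'a set \<Rightarrow> 'a set \<Rightarrow> bool" where
  "succ_ok k x S Sn \<longleftrightarrow> (card S < k \<and> Sn = insert x S) \<or>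
     (\<not> card S < k \<and> (\<exists>p\<in>S. Sn = insert x (S - {p})))"

lemma OF_hit: "\<sigma> (Suc t) \<in> S \<Longrightarrow> OF k \<sigma> t (Suc n) S = OF k \<sigma> (Suc t) n S"
  by simp

lemma OF_step_le:
  assumes "0 < k" "\<sigma> (Suc t) \<notin> S" "succ_ok k (\<sigma> (Suc t)) S Sn"
  shows "OF k \<sigma> t (Suc n) S \<le> Suc (OF k \<sigma> (Suc t) n Sn)"
proof (cases "card S < k")
  case True thus ?thesis using assms by (auto simp: succ_ok_def)
next
  case False
  then obtain p where p: "p \<in> S" "Sn = insert (\<sigma> (Suc t)) (S - {p})" using assms by (auto simp: succ_ok_def)
  have "finite S" using False assms(1) card.infinite by fastforce
  then show ?thesis using False assms p by (auto intro!: Min_le)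
qed

lemma OF_step_eq:
  assumes "0 < k" "\<sigma> (Suc t) \<notin> S"
  shows "\<exists>Sn. succ_ok k (\<sigma> (Suc t)) S Sn \<and> OF k \<sigma> t (Suc n) S = Suc (OF k \<sigma> (Suc t) n Sn)"
proof (cases "card S < k")
  case True thus ?thesis using assms by (auto simp: succ_ok_def)
next
  case False
  have fin: "finite S" using False assms(1) card.infinite by fastforce
  have ne: "S \<noteq> {}" using False assms(1) by auto
  let ?f = "\<lambda>p. OF k \<sigma> (Suc t) n (insert (\<sigma> (Suc t)) (S - {p}))"
  have "Min (?f ` S) \<in> ?f ` S" using fin ne by (intro Min_in) auto
  then obtain p where "p \<in> S" "Min (?f ` S) = ?f p" by auto
  thus ?thesis using False assms by (auto simp: succ_ok_def intro!: exI[of _ "insert (\<sigma> (Suc t)) (S - {p})"])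
qed

lemma succ_fin: "succ_ok k x S Sn \<Longrightarrow> finite S \<Longrightarrow> card S \<le> k \<Longrightarrow> x \<notin> S \<Longrightarrow> finite Sn \<and> card Sn \<le> k"
  unfolding succ_ok_def
  apply (auto simp: card_insert_if card_Diff_singleton_if)
  by (metis Suc_pred card_gt_0_iff empty_iff le_refl)

lemma OF_L1:
  assumes k: "0 < k"
  shows "finite S \<Longrightarrow> finite S' \<Longrightarrow> card S \<le> k \<Longrightarrow> card S' \<le> k \<Longrightarrow>
    OF k \<sigma> t n S \<le> OF k \<sigma> t n S' + card (S' - S)"
proof (induction n arbitrary: t S S')
  case 0 thus ?case by simp
next
  case (Suc n)
  let ?x = "\<sigma> (Suc t)"
  let ?O = "OF k \<sigma> (Suc t) n"
  show ?case
  proof (cases "?x \<in> S")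
    case xS: True
    show ?thesis
    proof (cases "?x \<in> S'")
      case True thus ?thesis using xS Suc by simp
    next
      case False
      obtain S'n where s: "succ_ok k ?x S' S'n" "OF k \<sigma> t (Suc n) S' = Suc (?O S'n)"
        using OF_step_eq[OF k, where \<sigma>=\<sigma> and t=t and S=S' and n=n] False by blast
      have f: "finite S'n" "card S'n \<le> k" using succ_fin[OF s(1)] Suc.prems False by auto
      have sub: "S'n - S \<subseteq> S' - S" using s(1) xS by (auto simp: succ_ok_def)
      have "card (S'n - S) \<le> card (S' - S)" using sub Suc.prems by (intro card_mono) auto
      moreover have "?O S \<le> ?O S'n + card (S'n - S)" using Suc.IH Suc.prems f by blast
      ultimately show ?thesis using xS s(2) by simp
    qed
  next
    case xnS: False
    show ?thesis
    proof (cases "?x \<in> S'")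
      case xS': True
      have "\<exists>Sn. succ_ok k ?x S Sn \<and> S' - Sn \<subseteq> (S' - S) - {?x}"
      proof (cases "card S < k")
        case True thus ?thesis by (auto simp: succ_ok_def)
      next
        case False
        have "\<not> S \<subseteq> S'"
        proof
          assume "S \<subseteq> S'" then have "S \<subset> S'" using xS' xnS by auto
          then have "card S < card S'" using Suc.prems psubset_card_mono by auto
          thus False using False Suc.prems by auto
        qed
        then obtain p where "p \<in> S" "p \<notin> S'" by auto
        thus ?thesis using False by (auto simp: succ_ok_def intro!: exI[of _ "insert ?x (S - {p})"])
      qed
      then obtain Sn where sn: "succ_ok k ?x S Sn" "S' - Sn \<subseteq> (S' - S) - {?x}" by blast
      have f: "finite Sn" "card Sn \<le> k" using succ_fin[OF sn(1)] Suc.prems xnS by auto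
      have "card (S' - Sn) \<le> card ((S' - S) - {?x})" using sn(2) Suc.prems by (intro card_mono) auto
      also have "\<dots> = card (S' - S) - 1" using xS' xnS Suc.prems by (simp add: card_Diff_singleton)
      finally have c1: "card (S' - Sn) \<le> card (S' - S) - 1" .
      have c2: "card (S' - S) \<ge> 1" using xS' xnS Suc.prems
        by (metis One_nat_def Suc_leI card_gt_0_iff Diff_iff empty_iff finite_Diff)
      have "OF k \<sigma> t (Suc n) S \<le> Suc (?O Sn)" using OF_step_le[OF k, where \<sigma>=\<sigma> and t=t and S=S and n=n] xnS sn(1) by blast
      also have "?O Sn \<le> ?O S' + card (S' - Sn)" using Suc.IH f Suc.prems by blast
      finally show ?thesis using c1 c2 xS' by simp
    next
      case xnS': False
      obtain S'n where s: "succ_ok k ?x S' S'n" "OF k \<sigma> t (Suc n) S' = Suc (?O S'n)"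
        using OF_step_eq[OF k, where \<sigma>=\<sigma> and t=t and S=S' and n=n] xnS' by blast
      have f': "finite S'n" "card S'n \<le> k" using succ_fin[OF s(1)] Suc.prems xnS' by auto
      have "\<exists>Sn. succ_ok k ?x S Sn \<and> S'n - Sn \<subseteq> S' - S"
      proof (cases "card S < k")
        case True thus ?thesis using s(1) by (auto simp: succ_ok_def)
      next
        case SF: False
        show ?thesis
        proof (cases "card S' < k")
          case True
          have "\<not> S \<subseteq> S'"
          proof
            assume "S \<subseteq> S'" then have "card S \<le> card S'" using Suc.prems card_mono by auto
            thus False using True SF by auto
          qed
          then obtain p where "p \<in> S" "p \<notin> S'" by auto
          thus ?thesis using SF True s(1)
            by (auto simp: succ_ok_def intro!: exI[of _ "insert ?x (S - {p})"])
        next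
          case False
          then obtain p' where p': "p' \<in> S'" "S'n = insert ?x (S' - {p'})" using s(1) by (auto simp: succ_ok_def)
          show ?thesis
          proof (cases "p' \<in> S")
            case True thus ?thesis using SF p'
              by (auto simp: succ_ok_def intro!: exI[of _ "insert ?x (S - {p'})"])
          next
            case pn: False
            have "\<not> S \<subseteq> S'"
            proof
              assume "S \<subseteq> S'" then have "S = S'" using Suc.prems SF False
                by (metis card_subset_eq le_antisym not_le)
              thus False using pn p' by auto
            qed
            then obtain p where "p \<in> S" "p \<notin> S'" by auto
            thus ?thesis using SF p'
              by (auto simp: succ_ok_def intro!: exI[of _ "insert ?x (S - {p})"])
          qed
        qed
      qed
      then obtain Sn where sn: "succ_ok k ?x S Sn" "S'n - Sn \<subseteq> S' - S" by blast
      have f: "finite Sn" "card Sn \<le> k" using succ_fin[OF sn(1)] Suc.prems xnS by auto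
      have c1: "card (S'n - Sn) \<le> card (S' - S)" using sn(2) Suc.prems by (intro card_mono) auto
      have "OF k \<sigma> t (Suc n) S \<le> Suc (?O Sn)" using OF_step_le[OF k, where \<sigma>=\<sigma> and t=t and S=S and n=n] xnS sn(1) by blast
      also have "?O Sn \<le> ?O S'n + card (S'n - Sn)" using Suc.IH f f' by blast
      finally show ?thesis using c1 s(2) by simp
    qed
  qed
qed


definition bef :: "(nat \<Rightarrow> 'a) \<Rightarrow> nat \<Rightarrow> nat \<Rightarrow> 'a \<Rightarrow> 'a \<Rightarrow> bool" where
  "bef \<sigma> t n a b \<longleftrightarrow> (\<forall>s. t < s \<and> s \<le> t + n \<and> \<sigma> s = b \<longrightarrow> (\<exists>s'. t < s' \<and> s' \<le> s \<and> \<sigma> s' = a))"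

lemma OF_L2:
  assumes k: "0 < k"
  shows "a \<noteq> b \<Longrightarrow> a \<notin> U \<Longrightarrow> b \<notin> U \<Longrightarrow> finite U \<Longrightarrow> card (insert a U) \<le> k \<Longrightarrow> bef \<sigma> t n a b \<Longrightarrow>
    OF k \<sigma> t n (insert a U) \<le> OF k \<sigma> t n (insert b U)"
proof (induction n arbitrary: t U)
  case 0 show ?case by simp
next
  case (Suc n)
  let ?x = "\<sigma> (Suc t)"
  let ?O = "OF k \<sigma> (Suc t) n"
  have befS: "bef \<sigma> (Suc t) n a b" if xa: "?x \<noteq> a"
    unfolding bef_def
  proof (intro allI impI)
    fix s assume s: "Suc t < s \<and> s \<le> Suc t + n \<and> \<sigma> s = b"
    then have "t < s \<and> s \<le> t + Suc n \<and> \<sigma> s = b" by auto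
    then obtain s' where "t < s'" "s' \<le> s" "\<sigma> s' = a" using Suc.prems(6) unfolding bef_def
      by blast
    moreover have "s' \<noteq> Suc t" using xa \<open>\<sigma> s' = a\<close> by auto
    ultimately show "\<exists>s'. Suc t < s' \<and> s' \<le> s \<and> \<sigma> s' = a" by (intro exI[of _ s']) auto
  qed
  have xb: "?x \<noteq> b"
  proof
    assume "?x = b"
    then have "t < Suc t \<and> Suc t \<le> t + Suc n \<and> \<sigma> (Suc t) = b" by auto
    then obtain s' where "t < s'" "s' \<le> Suc t" "\<sigma> s' = a" using Suc.prems(6) unfolding bef_def by blast
    then have "s' = Suc t" by auto
    thus False using \<open>?x = b\<close> \<open>\<sigma> s' = a\<close> Suc.prems(1) by auto
  qed
  have cS: "card (insert b U) = card (insert a U)" using Suc.prems by simp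
  show ?case
  proof (cases "?x = a")
    case xa: True
    have xnS': "?x \<notin> insert b U" using xa Suc.prems by auto
    obtain S'n where s: "succ_ok k ?x (insert b U) S'n" "OF k \<sigma> t (Suc n) (insert b U) = Suc (?O S'n)"
      using OF_step_eq[OF k, where \<sigma>=\<sigma> and t=t and S="insert b U" and n=n] xnS' by blast
    have f: "finite S'n" "card S'n \<le> k" using succ_fin[OF s(1)] Suc.prems xnS' cS by auto
    have "S'n - insert a U \<subseteq> {b}" using s(1) xa by (auto simp: succ_ok_def)
    then have c: "card (S'n - insert a U) \<le> 1" using card_mono[of "{b}" "S'n - insert a U"] by simp
    have "?O (insert a U) \<le> ?O S'n + card (S'n - insert a U)"
      using OF_L1[OF k, of "insert a U" S'n \<sigma> "Suc t" n] f Suc.prems(4,5) by simp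
    then show ?thesis using c s(2) xa by simp
  next
    case xna: False
    show ?thesis
    proof (cases "?x \<in> U")
      case True
      have "?O (insert a U) \<le> ?O (insert b U)" using Suc.IH[of U "Suc t"] Suc.prems(1-5) befS[OF xna] by blast
      thus ?thesis using True by simp
    next
      case xU: False
      have xnS: "?x \<notin> insert a U" and xnS': "?x \<notin> insert b U" using xU xna xb by auto
      obtain S'n where s: "succ_ok k ?x (insert b U) S'n" "OF k \<sigma> t (Suc n) (insert b U) = Suc (?O S'n)"
        using OF_step_eq[OF k, where \<sigma>=\<sigma> and t=t and S="insert b U" and n=n] xnS' by blast
      have "\<exists>Sn. succ_ok k ?x (insert a U) Sn \<and> ?O Sn \<le> ?O S'n"
      proof (cases "card (insert b U) < k")
        case True
        then have e: "S'n = insert b (insert ?x U)" using s(1) by (auto simp: succ_ok_def)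
        have "?O (insert a (insert ?x U)) \<le> ?O (insert b (insert ?x U))"
          using Suc.IH[of "insert ?x U" "Suc t"] Suc.prems(1-5) befS[OF xna] xna xb xU True cS
          by (simp add: card_insert_if)
        moreover have "insert ?x (insert a U) = insert a (insert ?x U)" by auto
        ultimately show ?thesis using True cS e
          by (auto simp: succ_ok_def intro!: exI[of _ "insert ?x (insert a U)"])
      next
        case False
        then obtain p' where p': "p' \<in> insert b U" "S'n = insert ?x (insert b U - {p'})" using s(1) by (auto simp: succ_ok_def)
        show ?thesis
        proof (cases "p' = b")
          case True
          then have "S'n = insert ?x (insert a U - {a})" using p' Suc.prems by auto
          thus ?thesis using False cS by (auto simp: succ_ok_def intro!: exI[of _ "insert ?x (insert a U - {a})"])
        next
          case pb: False
          then have pU: "p' \<in> U" using p' by auto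
          let ?V = "insert ?x (U - {p'})"
          have e1: "S'n = insert b ?V" using p' pb Suc.prems by auto
          have e2: "insert ?x (insert a U - {p'}) = insert a ?V" using pU Suc.prems by auto
          have so: "succ_ok k ?x (insert a U) (insert ?x (insert a U - {p'}))"
            using False cS pU unfolding succ_ok_def by auto
          have "card (insert ?x (insert a U - {p'})) \<le> k"
            using succ_fin[OF so] Suc.prems xnS by auto
          then have cV: "card (insert a ?V) \<le> k" using e2 by simp
          have "?O (insert a ?V) \<le> ?O (insert b ?V)"
            using Suc.IH[of ?V "Suc t"] Suc.prems(1-5) befS[OF xna] xna xb cV by auto
          thus ?thesis using False cS pU e1 e2
            by (auto simp: succ_ok_def intro!: exI[of _ "insert a ?V"])
        qed
      qed
      then obtain Sn where sn: "succ_ok k ?x (insert a U) Sn" "?O Sn \<le> ?O S'n" by blast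
      have "OF k \<sigma> t (Suc n) (insert a U) \<le> Suc (?O Sn)"
        using OF_step_le[OF k, where \<sigma>=\<sigma> and t=t and S="insert a U" and n=n] xnS sn(1) by blast
      thus ?thesis using sn(2) s(2) by simp
    qed
  qed
qed


lemma card_split:
  assumes "t < T"
  shows "card {s. t < s \<and> s \<le> T \<and> P s} = (if P (Suc t) then 1 else 0) + card {s. Suc t < s \<and> s \<le> T \<and> P s}"
proof -
  have fin: "finite {s. Suc t < s \<and> s \<le> T \<and> P s}" by (rule finite_subset[of _ "{..T}"]) auto
  show ?thesis
  proof (cases "P (Suc t)")
    case True
    then have "{s. t < s \<and> s \<le> T \<and> P s} = insert (Suc t) {s. Suc t < s \<and> s \<le> T \<and> P s}"
      using assms by auto
    thus ?thesis using True fin by simp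
  next
    case False
    then have "{s. t < s \<and> s \<le> T \<and> P s} = {s. Suc t < s \<and> s \<le> T \<and> P s}"
      using assms by (auto intro: Suc_lessI)
    thus ?thesis using False by simp
  qed
qed

lemma OF_LB:
  assumes k: "0 < k" and D: "feasible_run k \<sigma> T D"
  shows "t + n \<le> T \<Longrightarrow> OF k \<sigma> t n (D t) \<le> card {s. t < s \<and> s \<le> t + n \<and> \<sigma> s \<notin> D (s - 1)}"
proof (induction n arbitrary: t)
  case 0 show ?case by simp
next
  case (Suc n)
  let ?x = "\<sigma> (Suc t)"
  have st: "Suc t \<in> {1..T}" using Suc.prems by auto
  have F: "(?x \<in> D t \<longrightarrow> D (Suc t) = D t) \<and>
        (?x \<notin> D t \<and> card (D t) < k \<longrightarrow> D (Suc t) = insert ?x (D t)) \<and>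
        (?x \<notin> D t \<and> k \<le> card (D t) \<longrightarrow> (\<exists>p \<in> D t. D (Suc t) = insert ?x (D t - {p})))"
  proof -
    have "\<forall>t\<in>{1..T}.
        (\<sigma> t \<in> D (t - 1) \<longrightarrow> D t = D (t - 1)) \<and>
        (\<sigma> t \<notin> D (t - 1) \<and> card (D (t - 1)) < k \<longrightarrow> D t = insert (\<sigma> t) (D (t - 1))) \<and>
        (\<sigma> t \<notin> D (t - 1) \<and> k \<le> card (D (t - 1)) \<longrightarrow>
           (\<exists>p \<in> D (t - 1). D t = insert (\<sigma> t) (D (t - 1) - {p})))"
      using D unfolding feasible_run_def by blast
    from this[rule_format, OF st] show ?thesis by simp
  qed
  have IH: "OF k \<sigma> (Suc t) n (D (Suc t)) \<le> card {s. Suc t < s \<and> s \<le> t + Suc n \<and> \<sigma> s \<notin> D (s - 1)}"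
    using Suc.IH[of "Suc t"] Suc.prems by simp
  have cs: "card {s. t < s \<and> s \<le> t + Suc n \<and> \<sigma> s \<notin> D (s - 1)} =
     (if ?x \<notin> D t then 1 else 0) + card {s. Suc t < s \<and> s \<le> t + Suc n \<and> \<sigma> s \<notin> D (s - 1)}"
    using card_split[of t "t + Suc n" "\<lambda>s. \<sigma> s \<notin> D (s - 1)"] by simp
  show ?case
  proof (cases "?x \<in> D t")
    case True thus ?thesis using F IH cs by simp
  next
    case False
    have "succ_ok k ?x (D t) (D (Suc t))" using F False unfolding succ_ok_def by auto
    then have "OF k \<sigma> t (Suc n) (D t) \<le> Suc (OF k \<sigma> (Suc t) n (D (Suc t)))"
      using OF_step_le[OF k, where \<sigma>=\<sigma> and t=t and n=n] False by blast
    thus ?thesis using IH cs False by simp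
  qed
qed

locale altrun =
  fixes k T :: nat and \<sigma> :: "nat \<Rightarrow> 'a" and \<omega> :: "nat \<Rightarrow> nat"
    and C :: "nat \<Rightarrow> 'a set" and ev :: "nat \<Rightarrow> 'a option" and rl :: "nat \<Rightarrow> rule"
  assumes kpos: "0 < k" and run: "alt_oracle_run k \<sigma> \<omega> T C ev rl"
begin

lemma C0: "C 0 = {}" using run unfolding alt_oracle_run_def by simp

lemma stepS:
  assumes "t < T"
  shows "(\<sigma> (Suc t) \<in> C t \<longrightarrow> C (Suc t) = C t \<and> ev (Suc t) = None) \<and>
        (\<sigma> (Suc t) \<notin> C t \<and> card (C t) < k \<longrightarrow>
           C (Suc t) = insert (\<sigma> (Suc t)) (C t) \<and> ev (Suc t) = None) \<and>
        (\<sigma> (Suc t) \<notin> C t \<and> k \<le> card (C t) \<longrightarrow>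
           (\<exists>p. ev (Suc t) = Some p \<and> rl (Suc t) = chosen_rule \<sigma> ev rl (Suc t) \<and>
                rule_evicts (rl (Suc t)) \<sigma> \<omega> (C t) (Suc t) p \<and>
                C (Suc t) = insert (\<sigma> (Suc t)) (C t - {p})))"
proof -
  have "Suc t \<in> {1..T}" using assms by auto
  moreover have "\<forall>t \<in> {1..T}.
        (\<sigma> t \<in> C (t - 1) \<longrightarrow> C t = C (t - 1) \<and> ev t = None) \<and>
        (\<sigma> t \<notin> C (t - 1) \<and> card (C (t - 1)) < k \<longrightarrow>
           C t = insert (\<sigma> t) (C (t - 1)) \<and> ev t = None) \<and>
        (\<sigma> t \<notin> C (t - 1) \<and> k \<le> card (C (t - 1)) \<longrightarrow>
           (\<exists>p. ev t = Some p \<and> rl t = chosen_rule \<sigma> ev rl t \<and>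
                rule_evicts (rl t) \<sigma> \<omega> (C (t - 1)) t p \<and>
                C t = insert (\<sigma> t) (C (t - 1) - {p})))"
    using run unfolding alt_oracle_run_def by blast
  ultimately show ?thesis by (auto dest!: bspec[where x="Suc t"])
qed

lemma re_in: "rule_evicts r \<sigma> \<omega> S t p \<Longrightarrow> p \<in> S"
  by (cases r) (auto simp: blind_evicts_def corrector_evicts_def Let_def split: if_splits)

lemma stepS_cases:
  assumes "t < T"
  obtains (hit) "\<sigma> (Suc t) \<in> C t" "C (Suc t) = C t" "ev (Suc t) = None"
  | (nf) "\<sigma> (Suc t) \<notin> C t" "card (C t) < k" "C (Suc t) = insert (\<sigma> (Suc t)) (C t)" "ev (Suc t) = None"
  | (full) p where "\<sigma> (Suc t) \<notin> C t" "k \<le> card (C t)" "ev (Suc t) = Some p"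
      "rl (Suc t) = chosen_rule \<sigma> ev rl (Suc t)" "rule_evicts (rl (Suc t)) \<sigma> \<omega> (C t) (Suc t) p"
      "p \<in> C t" "C (Suc t) = insert (\<sigma> (Suc t)) (C t - {p})"
proof -
  note S = stepS[OF assms]
  show thesis
  proof (cases "\<sigma> (Suc t) \<in> C t")
    case True thus ?thesis using S that(1) by blast
  next
    case False
    show ?thesis
    proof (cases "card (C t) < k")
      case True thus ?thesis using S False that(2) by blast
    next
      case ck: False
      then obtain p where p: "ev (Suc t) = Some p" "rl (Suc t) = chosen_rule \<sigma> ev rl (Suc t)"
        "rule_evicts (rl (Suc t)) \<sigma> \<omega> (C t) (Suc t) p" "C (Suc t) = insert (\<sigma> (Suc t)) (C t - {p})"
        using S False by (meson not_le)
      show ?thesis using that(3)[OF False _ p(1,2,3) re_in[OF p(3)] p(4)] ck by simp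
    qed
  qed
qed

lemma feas: "feasible_run k \<sigma> T C"
  unfolding feasible_run_def
proof (rule conjI[OF C0], rule ballI)
  fix t assume t: "t \<in> {1..T}"
  then obtain t' where t': "t = Suc t'" "t' < T" by (cases t) auto
  show "(\<sigma> t \<in> C (t - 1) \<longrightarrow> C t = C (t - 1)) \<and>
        (\<sigma> t \<notin> C (t - 1) \<and> card (C (t - 1)) < k \<longrightarrow> C t = insert (\<sigma> t) (C (t - 1))) \<and>
        (\<sigma> t \<notin> C (t - 1) \<and> k \<le> card (C (t - 1)) \<longrightarrow>
           (\<exists>p \<in> C (t - 1). C t = insert (\<sigma> t) (C (t - 1) - {p})))"
    using t' by (cases rule: stepS_cases[OF t'(2), case_names hit nf full]) auto
qed


lemma fin_card: "t \<le> T \<Longrightarrow> finite (C t) \<and> card (C t) \<le> k"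
proof (induction t)
  case 0 thus ?case by (simp add: C0)
next
  case (Suc t)
  then have t: "t < T" by simp
  show ?case
  proof (cases rule: stepS_cases[OF t, case_names hit nf full])
    case hit thus ?thesis using Suc.IH t by simp
  next
    case nf thus ?thesis using Suc.IH t by (simp add: card_insert_if)
  next
    case (full p)
    have fin: "finite (C t)" "card (C t) \<le> k" using Suc.IH t by auto
    have c1: "card (C t - {p}) = card (C t) - 1" using full(6) fin by (simp add: card_Diff_singleton)
    have c0: "card (C t) \<ge> 1" using full(6) fin by (metis One_nat_def Suc_leI card_gt_0_iff empty_iff)
    have "card (C (Suc t)) = Suc (card (C t - {p}))" using full(1,7) fin by simp
    then show ?thesis using fin c1 c0 full(7) by simp
  qed
qed

lemma card_mono_C: "a \<le> b \<Longrightarrow> b \<le> T \<Longrightarrow> card (C a) \<le> card (C b)"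
proof (induction b)
  case 0 thus ?case by simp
next
  case (Suc b)
  show ?case
  proof (cases "a = Suc b")
    case True thus ?thesis by simp
  next
    case False
    then have ab: "a \<le> b" "b < T" using Suc.prems by auto
    have "card (C b) \<le> card (C (Suc b))"
    proof (cases rule: stepS_cases[OF ab(2), case_names hit nf full])
      case hit thus ?thesis by simp
    next
      case nf thus ?thesis using fin_card[of b] ab by (simp add: card_insert_if)
    next
      case (full p)
      have fin: "finite (C b)" using fin_card[of b] ab by auto
      have c1: "card (C b - {p}) = card (C b) - 1" using full(6) fin by (simp add: card_Diff_singleton)
      have c0: "card (C b) \<ge> 1" using full(6) fin by (metis One_nat_def Suc_leI card_gt_0_iff empty_iff)
      have "card (C (Suc b)) = Suc (card (C b - {p}))" using full(1,7) fin by simp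
      thus ?thesis using c1 c0 by simp
    qed
    thus ?thesis using Suc.IH ab by simp
  qed
qed


lemma in_req: "t < T \<Longrightarrow> \<sigma> (Suc t) \<in> C (Suc t)"
  by (cases rule: stepS_cases[case_names hit nf full]) auto

lemma leave: "y \<in> C a \<Longrightarrow> y \<notin> C b \<Longrightarrow> a \<le> b \<Longrightarrow> b \<le> T \<Longrightarrow> \<exists>e. a < e \<and> e \<le> b \<and> ev e = Some y"
proof (induction b)
  case 0 thus ?case by simp
next
  case (Suc b)
  show ?case
  proof (cases "y \<in> C b")
    case False
    have "a \<noteq> Suc b" using Suc.prems by auto
    then have "a \<le> b" using Suc.prems(3) by simp
    then obtain e where "a < e \<and> e \<le> b \<and> ev e = Some y" using Suc False by auto
    thus ?thesis by (intro exI[of _ e]) auto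
  next
    case True
    have b: "b < T" using Suc.prems by simp
    have "a \<noteq> Suc b" using Suc.prems by auto
    show ?thesis
    proof (cases rule: stepS_cases[OF b, case_names hit nf full])
      case hit thus ?thesis using True Suc.prems by simp
    next
      case nf thus ?thesis using True Suc.prems by simp
    next
      case (full p)
      then have "p = y" using True Suc.prems by auto
      thus ?thesis using full \<open>a \<noteq> Suc b\<close> Suc.prems by (intro exI[of _ "Suc b"]) auto
    qed
  qed
qed

lemma enter: "y \<notin> C a \<Longrightarrow> y \<in> C b \<Longrightarrow> a \<le> b \<Longrightarrow> b \<le> T \<Longrightarrow> \<exists>s. a < s \<and> s \<le> b \<and> \<sigma> s = y"
proof (induction b)
  case 0 thus ?case by simp
next
  case (Suc b)
  show ?case
  proof (cases "y \<in> C b")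
    case True
    have "a \<noteq> Suc b" using Suc.prems by auto
    then have "a \<le> b" using Suc.prems(3) by simp
    then obtain s where "a < s \<and> s \<le> b \<and> \<sigma> s = y" using Suc True by auto
    thus ?thesis by (intro exI[of _ s]) auto
  next
    case False
    have b: "b < T" using Suc.prems by simp
    have "a \<noteq> Suc b" using Suc.prems by auto
    have "\<sigma> (Suc b) = y"
      by (cases rule: stepS_cases[OF b, case_names hit nf full]) (use False Suc.prems in auto)
    thus ?thesis using \<open>a \<noteq> Suc b\<close> Suc.prems by (intro exI[of _ "Suc b"]) auto
  qed
qed

lemma evSome:
  assumes "1 \<le> e" "e \<le> T" "ev e = Some p"
  shows "\<sigma> e \<notin> C (e - 1) \<and> k \<le> card (C (e - 1)) \<and> rl e = chosen_rule \<sigma> ev rl e \<and>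
    rule_evicts (rl e) \<sigma> \<omega> (C (e - 1)) e p \<and> p \<in> C (e - 1) \<and> C e = insert (\<sigma> e) (C (e - 1) - {p})"
proof -
  obtain t where t: "e = Suc t" "t < T" using assms by (cases e) auto
  show ?thesis by (cases rule: stepS_cases[OF t(2), case_names hit nf full]) (use assms t in auto)
qed


definition ret :: "nat \<Rightarrow> 'a \<Rightarrow> bool" where "ret e p \<longleftrightarrow> (\<exists>s. e < s \<and> s \<le> T \<and> \<sigma> s = p)"
definition far :: "nat \<Rightarrow> 'a \<Rightarrow> bool" where "far e p \<longleftrightarrow> (\<forall>q\<in>C (e - 1). bef \<sigma> e (T - e) q p)"
definition PB :: "nat \<Rightarrow> bool" where "PB e \<longleftrightarrow> (\<exists>p. ev e = Some p \<and> rl e = BlindOracle \<and> ret e p)"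
definition PW :: "nat \<Rightarrow> bool" where "PW e \<longleftrightarrow> (\<exists>p. ev e = Some p \<and> rl e = BlindOracle \<and> ret e p \<and> \<not> far e p)"

lemma UB:
  "T - t = n \<Longrightarrow> t \<le> T \<Longrightarrow> card {e. t < e \<and> e \<le> T \<and> PB e} + card (\<sigma> ` {t<..T} - C t)
     \<le> OF k \<sigma> t n (C t) + card {e. t < e \<and> e \<le> T \<and> PW e}"
proof (induction n arbitrary: t)
  case 0
  then have tT: "t = T" by simp
  have e: "{e. T < e \<and> e \<le> T \<and> PB e} = {}" by auto
  show ?case unfolding tT by (subst e) simp
next
  case (Suc n)
  then have t: "t < T" and tn: "T - Suc t = n" by auto
  let ?x = "\<sigma> (Suc t)"
  let ?R = "\<sigma> ` {Suc t<..T}"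
  let ?O = "OF k \<sigma> (Suc t) n"
  have hR: "\<sigma> ` {t<..T} = insert ?x ?R"
  proof -
    have "{t<..T} = insert (Suc t) {Suc t<..T}" using t by auto
    thus ?thesis by simp
  qed
  have finR: "finite ?R" by simp
  have IH: "card {e. Suc t < e \<and> e \<le> T \<and> PB e} + card (?R - C (Suc t))
     \<le> ?O (C (Suc t)) + card {e. Suc t < e \<and> e \<le> T \<and> PW e}"
    using Suc.IH[of "Suc t"] tn t by simp
  have sB: "card {e. t < e \<and> e \<le> T \<and> PB e} = (if PB (Suc t) then 1 else 0) + card {e. Suc t < e \<and> e \<le> T \<and> PB e}"
    by (rule card_split[OF t])
  have sW: "card {e. t < e \<and> e \<le> T \<and> PW e} = (if PW (Suc t) then 1 else 0) + card {e. Suc t < e \<and> e \<le> T \<and> PW e}"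
    by (rule card_split[OF t])
  have finC: "finite (C t)" "card (C t) \<le> k" using fin_card[of t] t by auto
  have finC': "finite (C (Suc t))" "card (C (Suc t)) \<le> k" using fin_card[of "Suc t"] t by auto
  show ?case
  proof (cases rule: stepS_cases[OF t, case_names hit nf full])
    case hit
    then have "\<not> PB (Suc t)" "\<not> PW (Suc t)" by (auto simp: PB_def PW_def)
    moreover have "insert ?x ?R - C t = ?R - C (Suc t)" using hit by auto
    ultimately show ?thesis using IH sB sW hit hR by simp
  next
    case nf
    then have "\<not> PB (Suc t)" "\<not> PW (Suc t)" by (auto simp: PB_def PW_def)
    moreover have "insert ?x ?R - C t = insert ?x (?R - C (Suc t))" "?x \<notin> ?R - C (Suc t)" using nf by auto
    moreover have "finite (?R - C (Suc t))" by simp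
    ultimately show ?thesis using IH sB sW nf hR by simp
  next
    case (full p)
    obtain Sm where sm: "succ_ok k ?x (C t) Sm" "OF k \<sigma> t (Suc n) (C t) = Suc (?O Sm)"
      using OF_step_eq[OF kpos, where \<sigma>=\<sigma> and t=t and S="C t" and n=n] full(1) by blast
    then obtain m where m: "m \<in> C t" "Sm = insert ?x (C t - {m})"
      using full(2) by (auto simp: succ_ok_def)
    have finSm: "finite Sm" "card Sm \<le> k" using succ_fin[OF sm(1)] finC full(1) by auto
    define A0 where "A0 = ?R - C t - {?x}"
    have finA0: "finite A0" unfolding A0_def by simp
    have e1: "insert ?x ?R - C t = insert ?x A0" "?x \<notin> A0" using full(1) unfolding A0_def by auto
    have e2: "?R - C (Suc t) = (if p \<in> ?R then insert p A0 else A0)" "p \<notin> A0"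
      using full(1,6,7) unfolding A0_def by auto
    have cardeq: "card (insert ?x ?R - C t) + (if p \<in> ?R then 1 else 0) = card (?R - C (Suc t)) + 1"
      using e1 e2 finA0 by simp
    have retR: "ret (Suc t) p \<longleftrightarrow> p \<in> ?R" unfolding ret_def by auto
    have farE: "far (Suc t) p \<longleftrightarrow> (\<forall>q\<in>C t. bef \<sigma> (Suc t) n q p)" unfolding far_def using tn by simp
    have PBe: "PB (Suc t) \<longleftrightarrow> rl (Suc t) = BlindOracle \<and> ret (Suc t) p" using full(3) by (auto simp: PB_def)
    have PWe: "PW (Suc t) \<longleftrightarrow> rl (Suc t) = BlindOracle \<and> ret (Suc t) p \<and> \<not> far (Suc t) p"
      using full(3) by (auto simp: PW_def)
    have L1: "?O (C (Suc t)) \<le> ?O Sm + 1"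
    proof -
      have 1: "?O (C (Suc t)) \<le> ?O Sm + card (Sm - C (Suc t))"
        by (rule OF_L1[OF kpos finC'(1) finSm(1) finC'(2) finSm(2)])
      have "Sm - C (Suc t) \<subseteq> {p}" unfolding m(2) full(7) by auto
      then have "card (Sm - C (Suc t)) \<le> card {p}" by (intro card_mono) auto
      then have 2: "card (Sm - C (Suc t)) \<le> 1" by simp
      from 1 2 show ?thesis by linarith
    qed
    have L2: "?O (C (Suc t)) \<le> ?O Sm" if fr: "far (Suc t) p"
    proof (cases "m = p")
      case True thus ?thesis using m full(7) by simp
    next
      case False
      let ?U = "insert ?x (C t - {p, m})"
      have u1: "C (Suc t) = insert m ?U" using full(6,7) m(1) False by auto
      have u2: "Sm = insert p ?U" using full(6) m False by auto
      have "bef \<sigma> (Suc t) n m p" using fr farE m(1) by auto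
      moreover have "m \<notin> ?U" "p \<notin> ?U" using full(1,6) m(1) by auto
      moreover have "finite ?U" using finC by simp
      moreover have "card (insert m ?U) \<le> k" using u1 finC' by simp
      ultimately have "?O (insert m ?U) \<le> ?O (insert p ?U)"
        using OF_L2[OF kpos, of m p ?U \<sigma> "Suc t" n] False by simp
      thus ?thesis using u1 u2 by simp
    qed
    have nr: "far (Suc t) p" if "\<not> ret (Suc t) p"
      using that tn t unfolding far_def bef_def ret_def by auto
    have key: "?O (C (Suc t)) + (if PB (Suc t) then 1 else 0) + (if p \<in> ?R then 0 else 1)
        \<le> ?O Sm + (if PW (Suc t) then 1 else 0) + 1"
      using L1 L2 nr PBe PWe retR by (cases "ret (Suc t) p"; cases "far (Suc t) p"; simp)
    show ?thesis using IH sB sW hR cardeq key sm(2) by (simp split: if_splits)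
  qed
qed


lemma C_sub: "t \<le> T \<Longrightarrow> y \<in> C t \<Longrightarrow> \<exists>s. 0 < s \<and> s \<le> t \<and> \<sigma> s = y"
  using enter[of y 0 t] C0 by auto

lemma lastreq:
  assumes "t \<le> T" "y \<in> C t"
  shows "1 \<le> last_req \<sigma> t y \<and> last_req \<sigma> t y \<le> t \<and> \<sigma> (last_req \<sigma> t y) = y \<and>
    (\<forall>s. last_req \<sigma> t y < s \<and> s \<le> t \<longrightarrow> \<sigma> s \<noteq> y)"
proof -
  define A where "A = {i \<in> {1..t}. \<sigma> i = y}"
  obtain s where s: "0 < s" "s \<le> t" "\<sigma> s = y" using C_sub[OF assms] by blast
  have sA: "s \<in> A" using s unfolding A_def by simp
  have fin: "finite A" unfolding A_def by simp
  have ne: "A \<noteq> {}" using sA by blast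
  have m: "Max A \<in> A" using Max_in[OF fin ne] .
  then have m2: "1 \<le> Max A" "Max A \<le> t" "\<sigma> (Max A) = y" unfolding A_def by simp_all
  have mx: "\<forall>s. Max A < s \<and> s \<le> t \<longrightarrow> \<sigma> s \<noteq> y"
  proof (intro allI impI)
    fix s' assume h: "Max A < s' \<and> s' \<le> t"
    show "\<sigma> s' \<noteq> y"
    proof
      assume "\<sigma> s' = y"
      moreover have "1 \<le> s'" using h by simp
      ultimately have "s' \<in> A" using h unfolding A_def by simp
      then have "s' \<le> Max A" by (rule Max_ge[OF fin])
      thus False using h by simp
    qed
  qed
  have "last_req \<sigma> t y = Max A" unfolding last_req_def A_def by simp
  thus ?thesis using m2 mx by simp
qed

lemma nextreq_eq:
  assumes "i < u" "u \<le> T" "\<sigma> u = \<sigma> i" "\<forall>s. i < s \<and> s < u \<longrightarrow> \<sigma> s \<noteq> \<sigma> i"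
  shows "next_req \<sigma> T i = u"
proof -
  have ex: "\<exists>s. i < s \<and> s \<le> T \<and> \<sigma> s = \<sigma> i" using assms by auto
  have "(LEAST s. i < s \<and> s \<le> T \<and> \<sigma> s = \<sigma> i) = u"
  proof (rule Least_equality)
    show "i < u \<and> u \<le> T \<and> \<sigma> u = \<sigma> i" using assms by auto
  next
    fix y assume "i < y \<and> y \<le> T \<and> \<sigma> y = \<sigma> i"
    then show "u \<le> y" using assms(4) by (meson not_le)
  qed
  thus ?thesis using ex unfolding next_req_def by simp
qed

lemma nextreq_gt:
  assumes "u \<le> T" "\<forall>s. i < s \<and> s \<le> u \<longrightarrow> \<sigma> s \<noteq> \<sigma> i"
  shows "u < next_req \<sigma> T i"
proof (cases "\<exists>s. i < s \<and> s \<le> T \<and> \<sigma> s = \<sigma> i")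
  case True
  let ?l = "LEAST s. i < s \<and> s \<le> T \<and> \<sigma> s = \<sigma> i"
  have "i < ?l \<and> ?l \<le> T \<and> \<sigma> ?l = \<sigma> i" using LeastI_ex[OF True] .
  then have "\<not> ?l \<le> u" using assms(2) by blast
  thus ?thesis using True unfolding next_req_def by simp
next
  case False
  then have "next_req \<sigma> T i = T + 1" unfolding next_req_def by (simp only: if_False)
  thus ?thesis using assms(1) by simp
qed

definition uu :: "nat \<Rightarrow> nat" where
  "uu e = (LEAST s. e < s \<and> s \<le> T \<and> \<sigma> s = the (ev e))"

lemma uu_props:
  assumes "ev e = Some p" "ret e p"
  shows "e < uu e \<and> uu e \<le> T \<and> \<sigma> (uu e) = p \<and> (\<forall>s. e < s \<and> s \<le> T \<and> \<sigma> s = p \<longrightarrow> uu e \<le> s)"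
proof -
  have ex: "\<exists>s. e < s \<and> s \<le> T \<and> \<sigma> s = the (ev e)" using assms unfolding ret_def by simp
  show ?thesis using LeastI_ex[OF ex] Least_le[of "\<lambda>s. e < s \<and> s \<le> T \<and> \<sigma> s = the (ev e)"] assms
    unfolding uu_def by auto
qed

definition ZZ :: "(nat \<times> nat) set" where
  "ZZ = Sigma {1..T} (\<lambda>i. {min (\<omega> i) (next_req \<sigma> T i) ..< max (\<omega> i) (next_req \<sigma> T i)})"

lemma card_ZZ: "int (card ZZ) = pred_error \<sigma> \<omega> T"
proof -
  have "card ZZ = (\<Sum>i\<in>{1..T}. card {min (\<omega> i) (next_req \<sigma> T i) ..< max (\<omega> i) (next_req \<sigma> T i)})"
    unfolding ZZ_def by (rule card_SigmaI) auto
  then have "int (card ZZ) = (\<Sum>i\<in>{1..T}. int (max (\<omega> i) (next_req \<sigma> T i) - min (\<omega> i) (next_req \<sigma> T i)))"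
    by simp
  also have "\<dots> = (\<Sum>i\<in>{1..T}. \<bar>int (next_req \<sigma> T i) - int (\<omega> i)\<bar>)"
    by (intro sum.cong) auto
  finally show ?thesis unfolding pred_error_def .
qed

lemma W_charge:
  assumes "0 < e" "e \<le> T" "PW e"
  shows "\<exists>z\<in>ZZ. snd z = uu e"
proof -
  obtain p where p: "ev e = Some p" "rl e = BlindOracle" "ret e p" "\<not> far e p"
    using assms(3) unfolding PW_def by blast
  let ?S = "C (e - 1)"
  have E: "\<sigma> e \<notin> ?S" "p \<in> ?S" "rule_evicts (rl e) \<sigma> \<omega> ?S e p"
    using evSome[of e p] assms p(1) by auto
  have bl: "\<forall>q\<in>?S. \<omega> (last_req \<sigma> (e - 1) q) \<le> \<omega> (last_req \<sigma> (e - 1) p)"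
    using E(3) p(2) by (simp add: blind_evicts_def)
  have U: "e < uu e" "uu e \<le> T" "\<sigma> (uu e) = p" "\<forall>s. e < s \<and> s \<le> T \<and> \<sigma> s = p \<longrightarrow> uu e \<le> s"
    using uu_props[OF p(1) p(3)] by auto
  obtain q s where q: "q \<in> ?S" "e < s" "s \<le> T" "\<sigma> s = p" "\<not> (\<exists>s'. e < s' \<and> s' \<le> s \<and> \<sigma> s' = q)"
    using p(4) assms(2) unfolding far_def bef_def by auto
  have us: "uu e \<le> s" using U(4) q by auto
  have e1T: "e - 1 \<le> T" using assms(2) by simp
  define ip where "ip = last_req \<sigma> (e - 1) p"
  define iq where "iq = last_req \<sigma> (e - 1) q"
  have LP: "1 \<le> ip" "ip \<le> e - 1" "\<sigma> ip = p" "\<forall>s. ip < s \<and> s \<le> e - 1 \<longrightarrow> \<sigma> s \<noteq> p"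
    using lastreq[OF e1T E(2)] unfolding ip_def by auto
  have LQ: "1 \<le> iq" "iq \<le> e - 1" "\<sigma> iq = q" "\<forall>s. iq < s \<and> s \<le> e - 1 \<longrightarrow> \<sigma> s \<noteq> q"
    using lastreq[OF e1T q(1)] unfolding iq_def by auto
  have nup: "next_req \<sigma> T ip = uu e"
  proof (rule nextreq_eq)
    show "ip < uu e" using LP U by simp
    show "uu e \<le> T" by (rule U(2))
    show "\<sigma> (uu e) = \<sigma> ip" using U LP by simp
    show "\<forall>s. ip < s \<and> s < uu e \<longrightarrow> \<sigma> s \<noteq> \<sigma> ip"
    proof (intro allI impI)
      fix s' assume h: "ip < s' \<and> s' < uu e"
      show "\<sigma> s' \<noteq> \<sigma> ip"
      proof (cases "s' \<le> e - 1")
        case True thus ?thesis using LP h by auto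
      next
        case False
        show ?thesis
        proof (cases "s' = e")
          case True thus ?thesis using E LP by auto
        next
          case False
          then have "e < s'" using \<open>\<not> s' \<le> e - 1\<close> by simp
          thus ?thesis using U(2,4) h LP(3) by (metis le_trans less_imp_le_nat not_le)
        qed
      qed
    qed
  qed
  have nuq: "uu e < next_req \<sigma> T iq"
  proof (rule nextreq_gt)
    show "uu e \<le> T" by (rule U(2))
    show "\<forall>s. iq < s \<and> s \<le> uu e \<longrightarrow> \<sigma> s \<noteq> \<sigma> iq"
    proof (intro allI impI)
      fix s' assume h: "iq < s' \<and> s' \<le> uu e"
      show "\<sigma> s' \<noteq> \<sigma> iq"
      proof (cases "s' \<le> e - 1")
        case True thus ?thesis using LQ h by auto
      next
        case False
        show ?thesis
        proof (cases "s' = e")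
          case True thus ?thesis using E q(1) LQ by auto
        next
          case False
          then have "e < s'" using \<open>\<not> s' \<le> e - 1\<close> by simp
          moreover have "s' \<le> s" using h us by simp
          ultimately show ?thesis using q(5) LQ(3) by auto
        qed
      qed
    qed
  qed
  have om: "\<omega> iq \<le> \<omega> ip" using bl q(1) unfolding ip_def iq_def by auto
  have ipT: "ip \<in> {1..T}" "iq \<in> {1..T}" using LP LQ assms(2) by auto
  show ?thesis
  proof (cases "uu e < \<omega> ip")
    case True
    then have "(ip, uu e) \<in> ZZ" using nup ipT unfolding ZZ_def by auto
    thus ?thesis by force
  next
    case False
    then have "(iq, uu e) \<in> ZZ" using nuq om ipT unfolding ZZ_def by auto
    thus ?thesis by force
  qed
qed

lemma uu_inj: "inj_on uu {e. 0 < e \<and> e \<le> T \<and> PW e}"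
proof -
  have *: False if h: "0 < e1" "e1 \<le> T" "PW e1" "0 < e2" "e2 \<le> T" "PW e2" "uu e1 = uu e2" "e1 < e2" for e1 e2
  proof -
    obtain p1 where p1: "ev e1 = Some p1" "ret e1 p1" using h(3) unfolding PW_def by blast
    obtain p2 where p2: "ev e2 = Some p2" "ret e2 p2" using h(6) unfolding PW_def by blast
    have U1: "e1 < uu e1" "uu e1 \<le> T" "\<sigma> (uu e1) = p1" "\<forall>s. e1 < s \<and> s \<le> T \<and> \<sigma> s = p1 \<longrightarrow> uu e1 \<le> s"
      using uu_props[OF p1] by auto
    have U2: "e2 < uu e2" "\<sigma> (uu e2) = p2" using uu_props[OF p2] by auto
    have pp: "p1 = p2" using U1(3) U2(2) h(7) by simp
    have E1: "\<sigma> e1 \<notin> C (e1 - 1)" "p1 \<in> C (e1 - 1)" "C e1 = insert (\<sigma> e1) (C (e1 - 1) - {p1})"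
      using evSome[of e1 p1] h p1(1) by auto
    have E2: "p2 \<in> C (e2 - 1)" using evSome[of e2 p2] h p2(1) by auto
    have "p1 \<notin> C e1" using E1 by auto
    moreover have "e1 \<le> e2 - 1" "e2 - 1 \<le> T" using h by auto
    moreover have "p1 \<in> C (e2 - 1)" using E2 pp by simp
    ultimately obtain s where s: "e1 < s" "s \<le> e2 - 1" "\<sigma> s = p1"
      using enter[of p1 e1 "e2 - 1"] by blast
    have "uu e1 \<le> s" using U1(4) s h by auto
    thus False using s U2 h(7) by simp
  qed
  show ?thesis unfolding inj_on_def
    by (metis (mono_tags, lifting) * linorder_neqE_nat mem_Collect_eq)
qed

lemma wrg_le: "int (card {e. 0 < e \<and> e \<le> T \<and> PW e}) \<le> pred_error \<sigma> \<omega> T"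
proof -
  let ?W = "{e. 0 < e \<and> e \<le> T \<and> PW e}"
  have "card ?W = card (uu ` ?W)" using card_image[OF uu_inj] by simp
  also have "\<dots> \<le> card (snd ` ZZ)"
  proof (rule card_mono)
    show "finite (snd ` ZZ)" unfolding ZZ_def by auto
    show "uu ` ?W \<subseteq> snd ` ZZ"
    proof (rule image_subsetI)
      fix e assume "e \<in> ?W"
      then obtain z where "z \<in> ZZ" "snd z = uu e" using W_charge by blast
      thus "uu e \<in> snd ` ZZ" by (metis image_eqI)
    qed
  qed
  also have "\<dots> \<le> card ZZ" by (rule card_image_le) (auto simp: ZZ_def)
  finally show ?thesis using card_ZZ by simp
qed


definition pvs :: "nat \<Rightarrow> nat set" where "pvs t = {e \<in> {1..<t}. ev e = Some (\<sigma> t)}"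
definition pv :: "nat \<Rightarrow> nat" where "pv t = Max (pvs t)"
definition MM where "MM = {t \<in> {1..T}. \<sigma> t \<notin> C (t - 1)}"
definition NN where "NN = {t \<in> MM. \<exists>i\<in>{1..<t}. \<sigma> i = \<sigma> t}"
definition FF where "FF = {t \<in> MM. \<not> (\<exists>i\<in>{1..<t}. \<sigma> i = \<sigma> t)}"
definition NX where "NX X = {t \<in> NN. rl (pv t) = X}"

lemma in_req': "1 \<le> i \<Longrightarrow> i \<le> T \<Longrightarrow> \<sigma> i \<in> C i"
  using in_req[of "i - 1"] by simp

lemma NN_props:
  assumes "t \<in> NN"
  shows "1 \<le> pv t \<and> pv t < t \<and> ev (pv t) = Some (\<sigma> t) \<and> pv t \<in> pvs t \<and>
    k \<le> card (C (t - 1)) \<and> rl t = next_rule (rl (pv t)) \<and> \<sigma> t \<notin> C (t - 1) \<and> 1 \<le> t \<and> t \<le> T"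
proof -
  from assms obtain i where i: "i \<in> {1..<t}" "\<sigma> i = \<sigma> t" and t: "t \<in> {1..T}" "\<sigma> t \<notin> C (t - 1)"
    unfolding NN_def MM_def by auto
  have "\<sigma> t \<in> C i" using in_req'[of i] i t by auto
  moreover have "i \<le> t - 1" "t - 1 \<le> T" using i t by auto
  ultimately obtain e where e: "i < e" "e \<le> t - 1" "ev e = Some (\<sigma> t)"
    using leave[of "\<sigma> t" i "t - 1"] t(2) by blast
  have eP: "e \<in> pvs t" using e i unfolding pvs_def by auto
  have fin: "finite (pvs t)" unfolding pvs_def by simp
  have pin: "pv t \<in> pvs t" unfolding pv_def using Max_in[OF fin] eP by blast
  have E: "k \<le> card (C (e - 1))" using evSome[of e "\<sigma> t"] e i t by auto
  have "card (C (e - 1)) \<le> card (C (t - 1))" using card_mono_C[of "e - 1" "t - 1"] e t by auto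
  then have full: "k \<le> card (C (t - 1))" using E by simp
  obtain t' where t': "t = Suc t'" "t' < T" using t by (cases t) auto
  have "rl t = chosen_rule \<sigma> ev rl t"
    using stepS[OF t'(2)] t' t(2) full by auto
  also have "\<dots> = next_rule (rl (pv t))" unfolding chosen_rule_def pv_def pvs_def using i by auto
  finally show ?thesis using pin full t unfolding pvs_def by auto
qed

lemma card_MM: "card MM = card FF + card NN"
proof -
  have "MM = FF \<union> NN" "FF \<inter> NN = {}" unfolding FF_def NN_def by auto
  moreover have "finite FF" "finite NN" unfolding FF_def NN_def MM_def by auto
  ultimately show ?thesis by (simp add: card_Un_disjoint)
qed

lemma card_FF: "card FF \<le> card (\<sigma> ` {0<..T})"
proof -
  have inj: "inj_on \<sigma> FF"
  proof (rule inj_onI)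
    fix x y assume h: "x \<in> FF" "y \<in> FF" "\<sigma> x = \<sigma> y"
    show "x = y"
    proof (rule ccontr)
      assume "x \<noteq> y"
      then consider "x < y" | "y < x" by linarith
      thus False
      proof cases
        case 1 thus False using h unfolding FF_def MM_def by auto
      next
        case 2 thus False using h unfolding FF_def MM_def by auto
      qed
    qed
  qed
  have "card FF = card (\<sigma> ` FF)" using card_image[OF inj] by simp
  also have "\<dots> \<le> card (\<sigma> ` {0<..T})" by (rule card_mono) (auto simp: FF_def MM_def)
  finally show ?thesis .
qed

lemma pv_inj: "inj_on pv NN"
proof -
  have *: False if h: "t1 \<in> NN" "t2 \<in> NN" "pv t1 = pv t2" "t1 < t2" for t1 t2
  proof -
    have P1: "pv t1 < t1" "ev (pv t1) = Some (\<sigma> t1)" "1 \<le> t1" "t1 \<le> T" using NN_props[OF h(1)] by auto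
    have P2: "ev (pv t2) = Some (\<sigma> t2)" "\<sigma> t2 \<notin> C (t2 - 1)" "t2 \<le> T" using NN_props[OF h(2)] by auto
    have y: "\<sigma> t1 = \<sigma> t2" using P1(2) P2(1) h(3) by simp
    have "\<sigma> t2 \<in> C t1" using in_req'[of t1] P1 y by simp
    moreover have "t1 \<le> t2 - 1" "t2 - 1 \<le> T" using h P2 by auto
    ultimately obtain e where e: "t1 < e" "e \<le> t2 - 1" "ev e = Some (\<sigma> t2)"
      using leave[of "\<sigma> t2" t1 "t2 - 1"] P2(2) by blast
    have "e \<in> pvs t2" using e h(4) P1(3) unfolding pvs_def by auto
    then have "e \<le> pv t2" unfolding pv_def by (rule Max_ge[rotated]) (simp add: pvs_def)
    thus False using e P1 h(3) by simp
  qed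
  show ?thesis unfolding inj_on_def by (metis * linorder_neqE_nat)
qed

lemma pv_next:
  assumes "t \<in> NN" "rl (pv t) = next_rule X" "X \<noteq> Corrector"
  shows "pv t \<in> NX X"
proof -
  let ?e = "pv t"
  have P: "1 \<le> ?e" "?e < t" "ev ?e = Some (\<sigma> t)" "t \<le> T" using NN_props[OF assms(1)] by auto
  have E: "\<sigma> ?e \<notin> C (?e - 1)" "rl ?e = chosen_rule \<sigma> ev rl ?e" using evSome[of ?e "\<sigma> t"] P by auto
  have ex: "\<exists>i\<in>{1..<?e}. \<sigma> i = \<sigma> ?e"
  proof (rule ccontr)
    assume "\<not> ?thesis"
    then have "rl ?e = BlindOracle" using E(2) unfolding chosen_rule_def by simp
    thus False using assms(2,3) by (cases X) auto
  qed
  have M: "?e \<in> NN" using ex E P unfolding NN_def MM_def by auto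
  have "rl ?e = next_rule (rl (pv ?e))" using NN_props[OF M] by simp
  then have "next_rule X = next_rule (rl (pv ?e))" using assms(2) by simp
  then have "rl (pv ?e) = X" by (cases X; cases "rl (pv ?e)") auto
  thus ?thesis using M unfolding NX_def by simp
qed

lemma misses_bound: "misses \<sigma> T C \<le> card (\<sigma> ` {0<..T}) + 3 * card {e. 0 < e \<and> e \<le> T \<and> PB e}"
proof -
  have finN: "finite NN" unfolding NN_def MM_def by auto
  have fx: "finite (NX X)" for X using finN unfolding NX_def by auto
  have cN: "card NN = card (NX BlindOracle) + card (NX RandomAlg) + card (NX Corrector)"
  proof -
    have "NN = NX BlindOracle \<union> NX RandomAlg \<union> NX Corrector"
      unfolding NX_def by (auto intro: rule.exhaust)
    moreover have "NX BlindOracle \<inter> NX RandomAlg = {}" "(NX BlindOracle \<union> NX RandomAlg) \<inter> NX Corrector = {}"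
      unfolding NX_def by auto
    ultimately show ?thesis using fx by (simp add: card_Un_disjoint)
  qed
  have injX: "inj_on pv (NX X)" for X using pv_inj unfolding NX_def by (rule inj_on_subset) auto
  have cR: "card (NX RandomAlg) \<le> card (NX BlindOracle)"
  proof -
    have "card (NX RandomAlg) = card (pv ` NX RandomAlg)" using card_image[OF injX] by simp
    also have "\<dots> \<le> card (NX BlindOracle)"
      by (rule card_mono[OF fx]) (use pv_next[of _ BlindOracle] in \<open>auto simp: NX_def\<close>)
    finally show ?thesis .
  qed
  have cC: "card (NX Corrector) \<le> card (NX RandomAlg)"
  proof -
    have "card (NX Corrector) = card (pv ` NX Corrector)" using card_image[OF injX] by simp
    also have "\<dots> \<le> card (NX RandomAlg)"
      by (rule card_mono[OF fx]) (use pv_next[of _ RandomAlg] in \<open>auto simp: NX_def\<close>)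
    finally show ?thesis .
  qed
  have cB: "card (NX BlindOracle) \<le> card {e. 0 < e \<and> e \<le> T \<and> PB e}"
  proof -
    have "card (NX BlindOracle) = card (pv ` NX BlindOracle)" using card_image[OF injX] by simp
    also have "\<dots> \<le> card {e. 0 < e \<and> e \<le> T \<and> PB e}"
    proof (rule card_mono)
      show "finite {e. 0 < e \<and> e \<le> T \<and> PB e}" by simp
      show "pv ` NX BlindOracle \<subseteq> {e. 0 < e \<and> e \<le> T \<and> PB e}"
      proof (rule image_subsetI)
        fix t assume t: "t \<in> NX BlindOracle"
        then have tN: "t \<in> NN" and r: "rl (pv t) = BlindOracle" unfolding NX_def by auto
        have P: "1 \<le> pv t" "pv t < t" "ev (pv t) = Some (\<sigma> t)" "t \<le> T" using NN_props[OF tN] by auto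
        have "ret (pv t) (\<sigma> t)" unfolding ret_def using P by auto
        thus "pv t \<in> {e. 0 < e \<and> e \<le> T \<and> PB e}" using P r unfolding PB_def by auto
      qed
    qed
    finally show ?thesis .
  qed
  have "misses \<sigma> T C = card MM" unfolding misses_def MM_def by simp
  thus ?thesis using card_MM card_FF cN cR cC cB by linarith
qed


end


theorem mainTheorem13:
  fixes k T :: nat and \<sigma> :: "nat \<Rightarrow> 'a" and \<omega> :: "nat \<Rightarrow> nat"
    and C :: "nat \<Rightarrow> 'a set" and ev :: "nat \<Rightarrow> 'a option" and rl :: "nat \<Rightarrow> rule"
  assumes "0 < k"
    and "alt_oracle_run k \<sigma> \<omega> T C ev rl"
  shows "int (misses \<sigma> T C) \<le> 3 * int (OPT k \<sigma> T) + 3 * pred_error \<sigma> \<omega> T"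
proof -
  interpret altrun k T \<sigma> \<omega> C ev rl using assms by unfold_locales
  let ?cB = "card {e. 0 < e \<and> e \<le> T \<and> PB e}"
  let ?cW = "card {e. 0 < e \<and> e \<le> T \<and> PW e}"
  let ?comp = "card (\<sigma> ` {0<..T})"
  have ub: "?cB + card (\<sigma> ` {0<..T} - C 0) \<le> OF k \<sigma> 0 (T - 0) (C 0) + ?cW"
    using UB[of 0 T] by simp
  then have ub': "?cB + ?comp \<le> OF k \<sigma> 0 T {} + ?cW" using C0 by simp
  have "\<exists>m D. feasible_run k \<sigma> T D \<and> misses \<sigma> T D = m" using feas by blast
  then have "\<exists>D. feasible_run k \<sigma> T D \<and> misses \<sigma> T D = OPT k \<sigma> T"
    unfolding OPT_def by (rule LeastI_ex[where P = "\<lambda>m. \<exists>D. feasible_run k \<sigma> T D \<and> misses \<sigma> T D = m", OF exE]) blast+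
  then obtain D where D: "feasible_run k \<sigma> T D" "misses \<sigma> T D = OPT k \<sigma> T" by blast
  have D0: "D 0 = {}" using D(1) unfolding feasible_run_def by simp
  have "OF k \<sigma> 0 T (D 0) \<le> card {s. 0 < s \<and> s \<le> 0 + T \<and> \<sigma> s \<notin> D (s - 1)}"
    using OF_LB[OF assms(1) D(1), of 0 T] by simp
  also have "\<dots> = misses \<sigma> T D" unfolding misses_def by (rule arg_cong[where f=card]) auto
  finally have lb: "OF k \<sigma> 0 T {} \<le> OPT k \<sigma> T" using D0 D(2) by simp
  have mb: "misses \<sigma> T C \<le> ?comp + 3 * ?cB" by (rule misses_bound)
  have wb: "int ?cW \<le> pred_error \<sigma> \<omega> T" by (rule wrg_le)
  show ?thesis using ub' lb mb wb by linarith
qed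

end
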